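(* For all positive integers $r$ and $m$, there exist infinitely many primes $p$ such that $pm$ is a Schemmel nontotient number of order $r$, i.e. $pm\notin S_r(\mathbb{N})$.
   Context: For a positive integer $r$, the $r$-th Schemmel totient function $S_r:\mathbb{N}\to\mathbb{N}_0$ is the multiplicative arithmetic function (so $S_r(1)=1$ and $S_r(ab)=S_r(a)S_r(b)$ for coprime $a,b$) defined on prime powers by $S_r(p^{\alpha})=0$ if $p\le r$ and $S_r(p^\alpha)=p^{\alpha-1}(p-r)$ if $p>r$, for all primes $p$ and positive integers $\alpha$. A Schemmel nontotient number of order $r$ is a positive integer not in the range of $S_r$; $G_r$ denotes the set of these. *)

theory Defs
  imports "HOL-Computational_Algebra.Primes"
begin

text \<open>The value at 0 is irrelevant (0 is not in the domain).\<close>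
definition schemmel :: "nat \<Rightarrow> nat \<Rightarrow> nat" where
  "schemmel r n = (\<Prod>p\<in>prime_factors n.
      (if p \<le> r then 0 else p ^ (multiplicity p n - 1) * (p - r)))"

definition schemmel_nontotient :: "nat \<Rightarrow> nat \<Rightarrow> bool" where
  "schemmel_nontotient r k \<longleftrightarrow> k > 0 \<and> (\<nexists>n. n > 0 \<and> schemmel r n = k)"

end

theory Submission
  imports Defs "HOL-Number_Theory.Number_Theory" "HOL-Library.Infinite_Set"
begin

lemma geom_nat:
  fixes z :: nat
  assumes "z \<ge> 1"
  shows "z^t - 1 = (z - 1) * (\<Sum>i<t. z^i)"
proof -
  have "int (z^t - 1) = (int z)^t - 1" using assms by (simp add: of_nat_diff)
  also have "\<dots> = (int z - 1) * (\<Sum>i<t. (int z)^i)" by (rule power_diff_1_eq)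
  also have "\<dots> = int ((z - 1) * (\<Sum>i<t. z^i))" using assms by (simp add: of_nat_diff)
  finally show ?thesis by linarith
qed

lemma lte_lite:
  fixes z t p :: nat
  assumes p: "prime p" and z: "z \<ge> 1" and dv: "p dvd z - 1" and nd: "\<not> p dvd t"
    and nz: "z - 1 \<noteq> 0"
  shows "multiplicity p (z^t - 1) = multiplicity p (z - 1)"
proof -
  define Q where "Q = (\<Sum>i<t. z^i)"
  have eq: "z^t - 1 = (z - 1) * Q" unfolding Q_def using z by (rule geom_nat)
  have c: "[z = 1] (mod p)" using dv z by (simp add: cong_altdef_nat)
  have "[Q = (\<Sum>i<t. 1^i)] (mod p)" unfolding Q_def
    by (intro cong_sum cong_pow c)
  hence "[Q = t] (mod p)" by simp
  hence nQ: "\<not> p dvd Q" using nd cong_dvd_iff by blast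
  hence "Q \<noteq> 0" by (metis dvd_0_right)
  have "multiplicity p (z^t - 1) = multiplicity p (z - 1) + multiplicity p Q"
    unfolding eq using p nz \<open>Q \<noteq> 0\<close> by (simp add: prime_elem_multiplicity_mult_distrib)
  also have "multiplicity p Q = 0" using nQ by (rule not_dvd_imp_multiplicity_0)
  finally show ?thesis by simp
qed

lemma dirichlet_one:
  fixes S :: "nat set" and N :: nat
  assumes fin: "finite S" and Sp: "\<And>l. l \<in> S \<Longrightarrow> prime l"
  shows "\<exists>p. prime p \<and> p > N \<and> (\<forall>l\<in>S. l dvd p - 1)"
proof (cases "S = {}")
  case True
  obtain p where "prime p" "N < p" using bigger_prime by blast
  thus ?thesis using True by auto
next
  case False
  define a where "a = Suc (card S)"
  define E where "E = (\<Prod>l\<in>S. l ^ a)"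
  define e where "e l = (\<Prod>l'\<in>S - {l}. l' ^ a)" for l
  have Ee: "E = l ^ a * e l" if "l \<in> S" for l
    unfolding E_def e_def using fin that by (simp add: prod.remove)
  have lpos: "l \<ge> 2" if "l \<in> S" for l using Sp[OF that] prime_ge_2_nat by blast
  have epos: "e l \<ge> 1" for l unfolding e_def
    using lpos by (intro prod_ge_1) (force simp: Suc_le_eq)
  obtain l0 where l0: "l0 \<in> S" using False by blast
  have la2: "2 ^ a \<le> l ^ a" if "l \<in> S" for l using lpos[OF that] by (simp add: power_mono)
  have "2 \<le> (2::nat) ^ a" unfolding a_def by simp
  moreover have "l0 ^ a \<le> E" using Ee[OF l0] epos[of l0] by simp
  ultimately have E2: "E \<ge> 2" using la2[OF l0] by linarith
  define y where "y = fact N * E"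
  have fpos: "fact N \<ge> (1::nat)" by (simp add: Suc_le_eq)
  have "E \<le> y" unfolding y_def using fpos by simp
  hence y2: "y \<ge> 2" using E2 by linarith
  have ldy: "l dvd y" if "l \<in> S" for l
  proof -
    have "l dvd l ^ a" unfolding a_def by simp
    also have "\<dots> dvd E" using Ee[OF that] by simp
    also have "\<dots> dvd y" unfolding y_def by simp
    finally show ?thesis .
  qed
  define A where "A = y^E - 1"
  define B where "B l = y^(e l) - 1" for l
  have ypow: "y ^ k \<ge> 1" for k using y2 by simp
  have npy: "\<not> p dvd y" if "prime p" "p dvd A" for p
  proof
    assume "p dvd y"
    moreover have "y dvd y ^ E" using E2 by (intro dvd_power) auto
    ultimately have "p dvd y ^ E" by (rule dvd_trans)
    hence "p dvd y^E - (y^E - 1)" using that(2) unfolding A_def by (rule dvd_diff_nat)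
    hence "p dvd 1" using ypow[of E] by simp
    thus False using that(1) by simp
  qed
  have key: "\<exists>p. prime p \<and> p dvd A \<and> (\<forall>l\<in>S. \<not> p dvd B l)"
  proof (rule ccontr)
    assume H: "\<not> ?thesis"
    have yk2: "y ^ k \<ge> 2" if "k \<ge> 1" for k
    proof -
      have "y ^ 1 \<le> y ^ k" using that y2 by (intro power_increasing) auto
      thus ?thesis using y2 by simp
    qed
    have Bnz: "B l \<noteq> 0" for l unfolding B_def using yk2[OF epos[of l]] by simp
    have prodnz: "(\<Prod>l\<in>S. B l) \<noteq> 0" using Bnz fin by simp
    have Anz: "A \<noteq> 0" unfolding A_def using yk2[of E] E2 by simp
    have "A dvd (\<Prod>l\<in>S. B l)"
    proof (rule multiplicity_le_imp_dvd[OF Anz])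
      fix p :: nat assume p: "prime p"
      show "multiplicity p A \<le> multiplicity p (\<Prod>l\<in>S. B l)"
      proof (cases "p dvd A")
        case False thus ?thesis by (simp add: not_dvd_imp_multiplicity_0)
      next
        case True
        then obtain l where l: "l \<in> S" "p dvd B l" using H p by blast
        have "\<not> p dvd y" using npy[OF p True] .
        have nl: "\<not> p dvd l ^ a"
        proof
          assume "p dvd l ^ a"
          hence "p dvd l" using p prime_dvd_power by blast
          hence "p = l" using p Sp[OF l(1)] primes_dvd_imp_eq by blast
          thus False using ldy[OF l(1)] \<open>\<not> p dvd y\<close> by simp
        qed
        have AA: "A = (y ^ e l) ^ (l ^ a) - 1" unfolding A_def using Ee[OF l(1)]
          by (simp add: power_mult[symmetric] mult.commute)
        have "multiplicity p A = multiplicity p (B l)" unfolding AA B_def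
          by (rule lte_lite[OF p ypow]) (use l(2) nl Bnz in \<open>auto simp: B_def\<close>)
        also have "\<dots> \<le> multiplicity p (\<Prod>l\<in>S. B l)"
          by (rule dvd_imp_multiplicity_le[OF _ prodnz]) (use fin l(1) in \<open>simp add: dvd_prodI\<close>)
        finally show ?thesis .
      qed
    qed
    hence "A \<le> (\<Prod>l\<in>S. B l)" using prodnz by (simp add: dvd_imp_le)
    also have "\<dots> \<le> (\<Prod>l\<in>S. y ^ e l)" unfolding B_def by (intro prod_mono) auto
    also have "\<dots> = y ^ (\<Sum>l\<in>S. e l)" by (simp add: power_sum)
    also have "\<dots> \<le> y ^ (E - 1)"
    proof -
      have "2 ^ a * (\<Sum>l\<in>S. e l) = (\<Sum>l\<in>S. 2 ^ a * e l)" by (simp add: sum_distrib_left)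
      also have "\<dots> \<le> (\<Sum>l\<in>S. E)" using la2 Ee by (intro sum_mono) simp
      also have "\<dots> = card S * E" by simp
      also have "\<dots> < 2 ^ a * E" using E2 unfolding a_def
        by (intro mult_strict_right_mono) (auto intro: less_trans[OF less_exp])
      finally have "(\<Sum>l\<in>S. e l) < E" by simp
      thus ?thesis using y2 by (intro power_increasing) auto
    qed
    also have "\<dots> < A"
    proof -
      have x2: "y ^ (E - 1) \<ge> 2" using yk2 E2 by simp
      have "y ^ E = y * y ^ (E - 1)" using E2 by (simp add: power_eq_if)
      moreover have "2 * y ^ (E - 1) \<le> y * y ^ (E - 1)" using y2 by (rule mult_le_mono1)
      ultimately show ?thesis unfolding A_def using x2 by linarith
    qed
    finally show False by simp
  qed
  then obtain p where p: "prime p" "p dvd A" "\<forall>l\<in>S. \<not> p dvd B l" by blast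
  have py: "\<not> p dvd y" using npy p by blast
  have pN: "p > N"
  proof (rule ccontr)
    assume "\<not> p > N"
    hence "p dvd fact N" using p(1) by (intro dvd_fact) (auto simp: prime_gt_0_nat Suc_le_eq)
    hence "p dvd y" unfolding y_def by simp
    thus False using py by simp
  qed
  have "l dvd p - 1" if l: "l \<in> S" for l
  proof (rule ccontr)
    assume nl: "\<not> l dvd p - 1"
    have "[y ^ (p - 1) = 1] (mod p)" using fermat_theorem[OF p(1) py] .
    hence o1: "ord p y dvd p - 1" using ord_divides by blast
    have "[y ^ E = 1] (mod p)" using p(2) ypow[of E] unfolding A_def by (simp add: cong_altdef_nat)
    hence o2: "ord p y dvd l ^ a * e l" using ord_divides Ee[OF l] by metis
    have "\<not> l dvd ord p y" using o1 nl dvd_trans by blast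
    hence "coprime l (ord p y)" using Sp[OF l] by (simp add: prime_imp_coprime)
    hence "coprime (ord p y) (l ^ a)" by (simp add: coprime_commute)
    hence "ord p y dvd e l" using o2 coprime_dvd_mult_right_iff by blast
    hence "[y ^ e l = 1] (mod p)" using ord_divides by blast
    hence "p dvd B l" unfolding B_def using ypow[of "e l"] by (simp add: cong_altdef_nat)
    thus False using p(3) l by blast
  qed
  thus ?thesis using p(1) pN by blast
qed

theorem theorem1p1:
  fixes r m :: nat
  assumes "r > 0" and "m > 0"
  shows "infinite {p. prime p \<and> schemmel_nontotient r (p * m)}"
proof -
  define M where "M = (\<Prod>d\<in>{d. d dvd m}. d + r)"
  define S where "S = prime_factors M"
  have finD: "finite {d. d dvd m}" using assms(2) by simp
  have Mnz: "M \<noteq> 0" unfolding M_def using finD assms(1) by simp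
  have fin: "finite S" unfolding S_def by simp
  have Sp: "\<And>l. l \<in> S \<Longrightarrow> prime l" unfolding S_def by auto
  have ex_l: "\<exists>l\<in>S. l dvd d + r" if d: "d dvd m" for d
  proof -
    have "d + r \<noteq> 1" using assms(1) d assms(2) by (cases d) auto
    then obtain l where l: "prime l" "l dvd d + r" using prime_factor_nat by blast
    have "d + r dvd M" unfolding M_def using finD d by (intro dvd_prodI) auto
    hence "l dvd M" using l(2) by (rule dvd_trans[rotated])
    hence "l \<in> S" unfolding S_def using l(1) Mnz by (simp add: in_prime_factors_iff)
    thus ?thesis using l(2) by blast
  qed
  show ?thesis
    unfolding infinite_nat_iff_unbounded
  proof
    fix N
    obtain p where p: "prime p" "p > N + m + r" "\<forall>l\<in>S. l dvd p - 1"
      using dirichlet_one[OF fin Sp, of "N + m + r"] by blast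
    have p2: "p \<ge> 2" using p(1) prime_ge_2_nat by blast
    have "schemmel_nontotient r (p * m)"
      unfolding schemmel_nontotient_def
    proof (intro conjI notI)
      show "p * m > 0" using p2 assms(2) by simp
      assume "\<exists>n. n > 0 \<and> schemmel r n = p * m"
      then obtain n where n: "n > 0" "schemmel r n = p * m" by blast
      define f where "f q = (if q \<le> r then 0 else q ^ (multiplicity q n - 1) * (q - r))" for q
      have prodeq: "(\<Prod>q\<in>prime_factors n. f q) = p * m"
        using n(2) unfolding schemmel_def f_def by simp
      have "p dvd (\<Prod>q\<in>prime_factors n. f q)" unfolding prodeq by simp
      hence "\<exists>q\<in>prime_factors n. p dvd f q"
        using prime_dvd_prod_iff[of "prime_factors n" p f] p(1) by simp
      then obtain q where q: "q \<in> prime_factors n" "p dvd f q" by blast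
      have fqd: "f q dvd p * m" unfolding prodeq[symmetric] using q(1) by (intro dvd_prodI) auto
      have pm0: "p * m \<noteq> 0" using p2 assms(2) by simp
      have "f q \<noteq> 0" using fqd pm0 by (metis dvd_0_left_iff)
      hence qr: "\<not> q \<le> r" unfolding f_def by auto
      define k where "k = multiplicity q n"
      have fq: "f q = q ^ (k - 1) * (q - r)" unfolding f_def k_def using qr by simp
      have qp: "prime q" using q(1) by auto
      have "p dvd q ^ (k - 1) \<or> p dvd q - r" using q(2) p(1) unfolding fq
        by (simp add: prime_dvd_mult_iff)
      thus False
      proof
        assume h: "p dvd q ^ (k - 1)"
        hence "p dvd q" using p(1) prime_dvd_power by blast
        hence pq: "p = q" using p(1) qp primes_dvd_imp_eq by blast
        have "k - 1 \<noteq> 0" using h p2 by (cases "k - 1") auto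
        hence "p dvd p ^ (k - 1)" by simp
        hence "p * (p - r) dvd q ^ (k - 1) * (q - r)" using pq by (simp add: mult_dvd_mono)
        hence "p * (p - r) dvd f q" unfolding fq .
        hence "p * (p - r) dvd p * m" using fqd by (rule dvd_trans)
        hence "p - r dvd m" using p2 by simp
        hence "p - r \<le> m" using assms(2) by (rule dvd_imp_le)
        thus False using p(2) by linarith
      next
        assume "p dvd q - r"
        then obtain d where d: "q - r = p * d" by (auto elim: dvdE)
        have "p * (q ^ (k - 1) * d) dvd p * m" using fqd unfolding fq d by (simp add: ac_simps)
        hence "q ^ (k - 1) * d dvd m" using p2 by simp
        hence dm: "d dvd m" by (rule dvd_mult_right)
        have d0: "d \<ge> 1" using d qr by (cases d) auto
        obtain l where l: "l \<in> S" "l dvd d + r" using ex_l[OF dm] by blast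
        have lp: "l dvd p - 1" using p(3) l(1) by blast
        have pd: "(p - 1) * d + d = p * d" using p2 by (cases p) auto
        have qeq: "q = (p - 1) * d + (d + r)" using d qr pd by linarith
        have "l dvd q" unfolding qeq using lp l(2) by (simp add: dvd_add)
        hence "l = q" using Sp[OF l(1)] qp primes_dvd_imp_eq by blast
        moreover have "l \<le> d + r" using l(2) d0 by (intro dvd_imp_le) auto
        moreover have "p * d \<ge> 2 * d" using p2 by simp
        ultimately show False using d qr d0 by linarith
      qed
    qed
    thus "\<exists>n>N. n \<in> {p. prime p \<and> schemmel_nontotient r (p * m)}"
      using p(1,2) by (intro exI[of _ p]) auto
  qed
qed

end
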